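(* Let $\nu$ be a distribution on $[0,1]$ with density bounded by some constant $M>0$. Then the regret of the Follow-the-Mean algorithm satisfies, for every time horizon $T\ge 2$, \[R_T\le \frac12+\frac M4\big(1+\ln(T-1)\big).\]
   Context: Brokerage setting: for $p,v_1,v_2\in[0,1]$ let $\mathrm{gft}(p,v_1,v_2):=(v_1\vee v_2-v_1\wedge v_2)\,\mathbb I\{v_1\wedge v_2\le p\le v_1\vee v_2\}$ ($\vee,\wedge$ = max, min). Traders' valuations $V_1,V_2,\dots$ are i.i.d. with law $\nu$ on $[0,1]$. At each round $t\in\mathbb N$ the learner posts a price $P_t\in[0,1]$ and obtains $\mathrm{GFT}_t(P_t)$, where $\mathrm{GFT}_t(q):=\mathrm{gft}(q,V_{2t-1},V_{2t})$; in the full-feedback model $V_{2t-1},V_{2t}$ are revealed after round $t$. The regret at horizon $T$ is $R_T:=\sup_{p\in[0,1]}\mathbb E[\sum_{t=1}^T\mathrm{GFT}_t(p)]-\mathbb E[\sum_{t=1}^T\mathrm{GFT}_t(P_t)]$. The Follow-the-Mean (FTM) algorithm posts $P_1:=1/2$ and, for $t\ge2$, $P_t:=\frac{1}{2(t-1)}\sum_{s=1}^{2(t-1)}V_s$. "Density bounded by $M$" means absolutely continuous w.r.t. Lebesgue measure with density $f\le M$. *)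

theory Defs
  imports "HOL-Probability.Probability"
begin

definition gft :: "real \<Rightarrow> real \<Rightarrow> real \<Rightarrow> real" where
  "gft p v1 v2 = (max v1 v2 - min v1 v2) *
     (if min v1 v2 \<le> p \<and> p \<le> max v1 v2 then 1 else 0)"

text \<open>GFT_t(q) = gft(q, V_(2t-1), V_(2t)); rounds and valuations are 1-indexed.\<close>
definition GFT :: "(nat \<Rightarrow> 'a \<Rightarrow> real) \<Rightarrow> nat \<Rightarrow> real \<Rightarrow> 'a \<Rightarrow> real" where
  "GFT V t q \<omega> = gft q (V (2*t - 1) \<omega>) (V (2*t) \<omega>)"

definition ftm_price :: "(nat \<Rightarrow> 'a \<Rightarrow> real) \<Rightarrow> nat \<Rightarrow> 'a \<Rightarrow> real" where
  "ftm_price V t \<omega> = (if t \<le> 1 then 1/2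
     else (\<Sum>s=1..2*(t-1). V s \<omega>) / real (2*(t-1)))"

definition regret :: "'a measure \<Rightarrow> (nat \<Rightarrow> 'a \<Rightarrow> real) \<Rightarrow> (nat \<Rightarrow> 'a \<Rightarrow> real) \<Rightarrow> nat \<Rightarrow> real" where
  "regret \<Omega> V P T =
     (SUP p\<in>{0..1}. \<Sum>t=1..T. integral\<^sup>L \<Omega> (GFT V t p))
     - (\<Sum>t=1..T. integral\<^sup>L \<Omega> (\<lambda>\<omega>. GFT V t (P t \<omega>) \<omega>))"

end

theory Submission
  imports Defs
begin


lemma tri_int1:
  fixes a b :: real assumes "a \<le> b"
  shows "integral\<^sup>L lborel (\<lambda>x. indicator {a..b} x *\<^sub>R (b - x)) = (b-a)^2/2"
proof -
  have "integral\<^sup>L lborel (\<lambda>x. indicator {a..b} x *\<^sub>R (b - x)) = (\<lambda>x. b*x - x^2/2) b - (\<lambda>x. b*x - x^2/2) a"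
  proof (rule integral_FTC_atLeastAtMost[OF assms])
    fix x show "((\<lambda>x. b*x - x^2/2) has_vector_derivative (b - x)) (at x within {a..b})"
      unfolding has_real_derivative_iff_has_vector_derivative[symmetric]
      by (auto intro!: derivative_eq_intros simp: power2_eq_square field_simps)
  qed (intro continuous_intros)
  then show ?thesis by (simp add: power2_eq_square field_simps)
qed

lemma tri_int2:
  fixes a b :: real assumes "a \<le> b"
  shows "integral\<^sup>L lborel (\<lambda>x. indicator {a..b} x *\<^sub>R (x - a)) = (b-a)^2/2"
proof -
  have "integral\<^sup>L lborel (\<lambda>x. indicator {a..b} x *\<^sub>R (x - a)) = (\<lambda>x. (x-a)^2/2) b - (\<lambda>x. (x-a)^2/2) a"
  proof (rule integral_FTC_atLeastAtMost[OF assms])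
    fix x show "((\<lambda>x. (x-a)^2/2) has_vector_derivative (x - a)) (at x within {a..b})"
      unfolding has_real_derivative_iff_has_vector_derivative[symmetric]
      by (auto intro!: derivative_eq_intros simp: power2_eq_square field_simps)
  qed (intro continuous_intros)
  then show ?thesis by (simp add: power2_eq_square field_simps)
qed



lemma dens_tri:
  fixes f :: "real \<Rightarrow> real" and g :: "real \<Rightarrow> real"
  assumes fm: "f \<in> borel_measurable borel" and f0: "\<And>x. 0 \<le> f x" and fM: "\<And>x. f x \<le> M"
    and ab: "a \<le> b" and gm: "g \<in> borel_measurable borel"
    and g0: "\<And>x. a \<le> x \<Longrightarrow> x \<le> b \<Longrightarrow> 0 \<le> g x"
    and gint: "integral\<^sup>L lborel (\<lambda>x. indicator {a..b} x *\<^sub>R g x) = (b-a)^2/2"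
    and gcont: "continuous_on {a..b} g"
  shows "(\<integral>x. indicator {a<..b} x * g x \<partial>density lborel (\<lambda>x. ennreal (f x))) \<le> M*(b-a)^2/2"
proof -
  have i1: "integrable lborel (\<lambda>x. indicator {a..b} x *\<^sub>R g x)"
    using borel_integrable_atLeastAtMost'[OF gcont] by (simp add: set_integrable_def)
  have i2: "integrable lborel (\<lambda>x. M * (indicator {a..b} x *\<^sub>R g x))"
    using i1 by simp
  have i3: "integrable lborel (\<lambda>x. f x *\<^sub>R (indicator {a<..b} x * g x))"
  proof (rule Bochner_Integration.integrable_bound[OF i2])
    show "(\<lambda>x. f x *\<^sub>R (indicator {a<..b} x * g x)) \<in> borel_measurable lborel"
      using fm gm by measurable
    show "AE x in lborel. norm (f x *\<^sub>R (indicator {a<..b} x * g x)) \<le> norm (M * (indicator {a..b} x *\<^sub>R g x))"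
    proof (intro AE_I2)
      fix x
      have M0: "0 \<le> M" using f0[of x] fM[of x] by linarith
      show "norm (f x *\<^sub>R (indicator {a<..b} x * g x)) \<le> norm (M * (indicator {a..b} x *\<^sub>R g x))"
        using f0[of x] fM[of x] g0[of x] M0
        by (auto simp: indicator_def abs_mult intro!: mult_right_mono)
    qed
  qed
  have "(\<integral>x. indicator {a<..b} x * g x \<partial>density lborel (\<lambda>x. ennreal (f x)))
      = (\<integral>x. f x *\<^sub>R (indicator {a<..b} x * g x) \<partial>lborel)"
    using fm f0 gm by (intro integral_density) auto
  also have "\<dots> \<le> (\<integral>x. M * (indicator {a..b} x *\<^sub>R g x) \<partial>lborel)"
  proof (rule integral_mono[OF i3 i2])
    fix x
    show "f x *\<^sub>R (indicator {a<..b} x * g x) \<le> M * (indicator {a..b} x *\<^sub>R g x)"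
      using f0[of x] fM[of x] g0[of x]
      by (auto simp: indicator_def intro!: mult_right_mono)
  qed
  also have "\<dots> = M*(b-a)^2/2" using gint by simp
  finally show ?thesis .
qed




definition Hf :: "real measure \<Rightarrow> real \<Rightarrow> real \<Rightarrow> real" where
  "Hf \<nu> \<mu> p = (\<integral>x. max 0 (p - x) + indicator {..p} x * (\<mu> - p) \<partial>\<nu>)"

lemma int01:
  fixes g :: "real \<Rightarrow> real"
  assumes "prob_space \<nu>" "sets \<nu> = sets borel" "AE x in \<nu>. 0 \<le> x \<and> x \<le> 1"
    and "g \<in> borel_measurable borel" and "\<And>x. 0 \<le> x \<Longrightarrow> x \<le> 1 \<Longrightarrow> \<bar>g x\<bar> \<le> B"
  shows "integrable \<nu> g"
proof -
  interpret prob_space \<nu> by fact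
  show ?thesis
  proof (rule integrable_const_bound[where B=B])
    show "AE x in \<nu>. norm (g x) \<le> B" using assms(3) by eventually_elim (use assms(5) in auto)
    show "g \<in> borel_measurable \<nu>" by (subst measurable_cong_sets[OF assms(2) refl]) (rule assms(4))
  qed
qed

lemma Hf_diff:
  assumes P: "prob_space \<nu>" "sets \<nu> = sets borel" "AE x in \<nu>. 0 \<le> x \<and> x \<le> 1" and qp: "q \<le> p"
  shows "Hf \<nu> \<mu> p - Hf \<nu> \<mu> q = (\<integral>x. indicator {q<..p} x * (\<mu> - x) \<partial>\<nu>)"
proof -
  have I: "integrable \<nu> (\<lambda>x. max 0 (r - x) + indicator {..r} x * (\<mu> - r))" for r
    by (rule int01[OF P, where B="\<bar>r\<bar> + 1 + \<bar>\<mu> - r\<bar>"]) (auto simp: indicator_def)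
  have "Hf \<nu> \<mu> p - Hf \<nu> \<mu> q = (\<integral>x. (max 0 (p - x) + indicator {..p} x * (\<mu> - p)) -
          (max 0 (q - x) + indicator {..q} x * (\<mu> - q)) \<partial>\<nu>)"
    unfolding Hf_def by (rule Bochner_Integration.integral_diff[symmetric, OF I I])
  also have "\<dots> = (\<integral>x. indicator {q<..p} x * (\<mu> - x) \<partial>\<nu>)"
    by (rule Bochner_Integration.integral_cong) (use qp in \<open>auto simp: indicator_def\<close>)
  finally show ?thesis .
qed

lemma Hf_le:
  assumes P: "prob_space \<nu>" "sets \<nu> = sets borel" "AE x in \<nu>. 0 \<le> x \<and> x \<le> 1"
  shows "Hf \<nu> \<mu> p \<le> Hf \<nu> \<mu> \<mu>"
proof (cases "p \<le> \<mu>")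
  case True
  have "0 \<le> (\<integral>x. indicator {p<..\<mu>} x * (\<mu> - x) \<partial>\<nu>)"
    by (rule integral_nonneg_AE) (auto simp: indicator_def)
  then show ?thesis using Hf_diff[OF P True, of \<mu>] by linarith
next
  case False
  have "0 \<le> (\<integral>x. indicator {\<mu><..p} x * (x - \<mu>) \<partial>\<nu>)"
    by (rule integral_nonneg_AE) (auto simp: indicator_def)
  moreover have "(\<integral>x. indicator {\<mu><..p} x * (x - \<mu>) \<partial>\<nu>) = - (\<integral>x. indicator {\<mu><..p} x * (\<mu> - x) \<partial>\<nu>)"
    by (subst integral_minus[symmetric]) (auto intro!: Bochner_Integration.integral_cong simp: algebra_simps)
  ultimately have "(\<integral>x. indicator {\<mu><..p} x * (\<mu> - x) \<partial>\<nu>) \<le> 0" by linarith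
  then show ?thesis using Hf_diff[OF P, of \<mu> p \<mu>] False by linarith
qed

lemma Hf_quad:
  fixes f :: "real \<Rightarrow> real"
  assumes P: "prob_space \<nu>" "sets \<nu> = sets borel" "AE x in \<nu>. 0 \<le> x \<and> x \<le> 1"
    and nu: "\<nu> = density lborel (\<lambda>x. ennreal (f x))"
    and fm: "f \<in> borel_measurable borel" and f0: "\<And>x. 0 \<le> f x" and fM: "\<And>x. f x \<le> M"
  shows "Hf \<nu> \<mu> \<mu> - Hf \<nu> \<mu> q \<le> M * (q - \<mu>)^2 / 2"
proof (cases "q \<le> \<mu>")
  case True
  have "(\<integral>x. indicator {q<..\<mu>} x * (\<mu> - x) \<partial>\<nu>) \<le> M * (\<mu> - q)^2/2"
    unfolding nu
    by (rule dens_tri[OF fm f0 fM True]) (use tri_int1[OF True] in \<open>auto intro!: continuous_intros\<close>)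
  then show ?thesis using Hf_diff[OF P True, of \<mu>] by (simp add: power2_commute)
next
  case False
  then have F: "\<mu> \<le> q" by simp
  have "(\<integral>x. indicator {\<mu><..q} x * (x - \<mu>) \<partial>\<nu>) \<le> M * (q - \<mu>)^2/2"
    unfolding nu
    by (rule dens_tri[OF fm f0 fM F]) (use tri_int2[OF F] in \<open>auto intro!: continuous_intros\<close>)
  moreover have "(\<integral>x. indicator {\<mu><..q} x * (x - \<mu>) \<partial>\<nu>) = - (\<integral>x. indicator {\<mu><..q} x * (\<mu> - x) \<partial>\<nu>)"
    by (subst integral_minus[symmetric]) (auto intro!: Bochner_Integration.integral_cong simp: algebra_simps)
  ultimately show ?thesis using Hf_diff[OF P F, of \<mu>] by simp
qed

lemma Hf_mu:
  assumes P: "prob_space \<nu>" "sets \<nu> = sets borel" "AE x in \<nu>. 0 \<le> x \<and> x \<le> 1"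
    and mu: "\<mu> = (\<integral>x. x \<partial>\<nu>)"
  shows "Hf \<nu> \<mu> \<mu> \<le> 1/4" and "0 \<le> \<mu>" and "\<mu> \<le> 1"
proof -
  interpret prob_space \<nu> by fact
  have Ix: "integrable \<nu> (\<lambda>x. x)" by (rule int01[OF P, where B=1]) auto
  show m0: "0 \<le> \<mu>" unfolding mu by (rule integral_nonneg_AE) (use P(3) in auto)
  have "\<mu> \<le> (\<integral>x. 1 \<partial>\<nu>)" unfolding mu
    by (rule integral_mono_AE[OF Ix]) (use P(3) in auto)
  then show m1: "\<mu> \<le> 1" by (simp add: prob_space)
  have "Hf \<nu> \<mu> \<mu> = (\<integral>x. max 0 (\<mu> - x) \<partial>\<nu>)" unfolding Hf_def by simp
  also have "\<dots> \<le> (\<integral>x. \<mu> * (1 - x) \<partial>\<nu>)"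
  proof (rule integral_mono_AE)
    show "integrable \<nu> (\<lambda>x. max 0 (\<mu> - x))" by (rule int01[OF P, where B="\<bar>\<mu>\<bar>+1"]) auto
    show "integrable \<nu> (\<lambda>x. \<mu> * (1 - x))" by (rule int01[OF P, where B="\<bar>\<mu>\<bar>"]) (auto simp: abs_mult intro!: mult_left_le)
    show "AE x in \<nu>. max 0 (\<mu> - x) \<le> \<mu> * (1 - x)" using P(3)
    proof eventually_elim
      case (elim x) then show ?case using m0 m1 mult_left_le[of \<mu> x] mult_left_le[of x \<mu>]
        by (auto simp: algebra_simps max_def mult.commute)
    qed
  qed
  also have "\<dots> = \<mu> * (1 - \<mu>)" using Ix by (simp add: mu prob_space)
  also have "\<dots> \<le> 1/4" using zero_le_power2[of "\<mu> - 1/2"] by (simp add: power2_eq_square algebra_simps)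
  finally show "Hf \<nu> \<mu> \<mu> \<le> 1/4" .
qed




lemma (in prob_space) indep_blocks:
  assumes ind: "indep_vars (\<lambda>_. borel) V I" and AB: "A \<inter> B = {}" "A \<subseteq> I" "B \<subseteq> I"
   and g: "g \<in> measurable (PiM A (\<lambda>_. borel)) N1" and h: "h \<in> measurable (PiM B (\<lambda>_. borel)) N2"
  shows "indep_var N1 (\<lambda>\<omega>. g (restrict (\<lambda>i. V i \<omega>) A)) N2 (\<lambda>\<omega>. h (restrict (\<lambda>i. V i \<omega>) B))"
  using indep_var_compose[OF indep_var_restrict[OF ind AB] g h] by (simp add: comp_def)

locale ftm_setup =
  fixes \<Omega> :: "'a measure" and V :: "nat \<Rightarrow> 'a \<Rightarrow> real" and \<nu> :: "real measure"
    and f :: "real \<Rightarrow> real" and M :: real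
  assumes PO: "prob_space \<Omega>" and Pnu: "prob_space \<nu>" and nu01: "measure \<nu> {0..1} = 1"
    and fm: "f \<in> borel_measurable borel" and f0: "\<And>x. 0 \<le> f x" and fM: "\<And>x. f x \<le> M"
    and nu: "\<nu> = density lborel (\<lambda>x. ennreal (f x))"
    and ind: "prob_space.indep_vars \<Omega> (\<lambda>_. borel) V {1..}"
    and dist: "\<And>i. i \<ge> 1 \<Longrightarrow> distr \<Omega> borel (V i) = \<nu>"
begin

interpretation O: prob_space \<Omega> by (rule PO)
interpretation N: prob_space \<nu> by (rule Pnu)

lemma sets_nu: "sets \<nu> = sets borel" unfolding nu by simp

lemma space_nu: "space \<nu> = UNIV" unfolding nu by simp

lemma AE_nu01: "AE x in \<nu>. 0 \<le> x \<and> x \<le> 1"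
proof -
  have "AE x in \<nu>. x \<in> {0..1}" by (rule N.AE_prob_1[OF nu01])
  then show ?thesis by auto
qed

lemmas nuP = Pnu sets_nu AE_nu01

lemma nu_single: "measure \<nu> {p} = 0"
proof -
  have "emeasure \<nu> {p} = (\<integral>\<^sup>+ x. ennreal (f x) * indicator {p} x \<partial>lborel)"
    unfolding nu using fm by (intro emeasure_density) auto
  also have "\<dots> = (\<integral>\<^sup>+ (x::real). 0 \<partial>lborel)"
  proof (rule nn_integral_cong_AE)
    show "AE x in lborel. ennreal (f x) * indicator {p} x = 0"
      using AE_lborel_singleton[of p] by eventually_elim (auto simp: indicator_def)
  qed
  finally show ?thesis by (simp add: measure_def)
qed

lemma rv: "i \<ge> 1 \<Longrightarrow> V i \<in> borel_measurable \<Omega>"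
  using ind unfolding O.indep_vars_def by auto

lemma AE_V01: "i \<ge> 1 \<Longrightarrow> AE \<omega> in \<Omega>. 0 \<le> V i \<omega> \<and> V i \<omega> \<le> 1"
proof -
  assume i: "i \<ge> 1"
  have "AE x in distr \<Omega> borel (V i). 0 \<le> x \<and> x \<le> 1" unfolding dist[OF i] by (rule AE_nu01)
  moreover have "{x \<in> space borel. 0 \<le> x \<and> x \<le> (1::real)} \<in> sets borel" by measurable
  ultimately show ?thesis using AE_distr_iff[OF rv[OF i], of "\<lambda>x. 0 \<le> x \<and> x \<le> 1"] by simp
qed

lemma int_V:
  fixes g :: "real \<Rightarrow> real"
  assumes "i \<ge> 1" "g \<in> borel_measurable borel"
  shows "(\<integral>\<omega>. g (V i \<omega>) \<partial>\<Omega>) = (\<integral>x. g x \<partial>\<nu>)"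
  using integral_distr[OF rv[OF assms(1)] assms(2)] dist[OF assms(1)] by simp

lemma integrable_V:
  fixes g :: "real \<Rightarrow> real"
  assumes "i \<ge> 1" "g \<in> borel_measurable borel" "\<And>x. 0 \<le> x \<Longrightarrow> x \<le> 1 \<Longrightarrow> \<bar>g x\<bar> \<le> B"
  shows "integrable \<Omega> (\<lambda>\<omega>. g (V i \<omega>))"
proof (rule O.integrable_const_bound[where B=B])
  show "AE x in \<Omega>. norm (g (V i x)) \<le> B" using AE_V01[OF assms(1)] by eventually_elim (use assms(3) in auto)
  show "(\<lambda>x. g (V i x)) \<in> borel_measurable \<Omega>" using rv[OF assms(1)] assms(2) by measurable
qed

lemma int_prod:
  fixes a b :: "real \<Rightarrow> real"
  assumes ij: "i \<ge> 1" "j \<ge> 1" "i \<noteq> j" and a: "a \<in> borel_measurable borel" "\<And>x. 0 \<le> x \<Longrightarrow> x \<le> 1 \<Longrightarrow> \<bar>a x\<bar> \<le> B"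
    and b: "b \<in> borel_measurable borel" "\<And>x. 0 \<le> x \<Longrightarrow> x \<le> 1 \<Longrightarrow> \<bar>b x\<bar> \<le> C"
  shows "(\<integral>\<omega>. a (V i \<omega>) * b (V j \<omega>) \<partial>\<Omega>) = (\<integral>x. a x \<partial>\<nu>) * (\<integral>x. b x \<partial>\<nu>)"
proof -
  have "O.indep_var borel (\<lambda>\<omega>. (\<lambda>x. a (x i)) (restrict (\<lambda>i. V i \<omega>) {i})) borel (\<lambda>\<omega>. (\<lambda>x. b (x j)) (restrict (\<lambda>i. V i \<omega>) {j}))"
  proof (rule O.indep_blocks[OF ind])
    show "(\<lambda>x. a (x i)) \<in> borel_measurable (PiM {i} (\<lambda>_. borel))" using a(1) by measurable
    show "(\<lambda>x. b (x j)) \<in> borel_measurable (PiM {j} (\<lambda>_. borel))" using b(1) by measurable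
  qed (use ij in auto)
  then have I: "O.indep_var borel (\<lambda>\<omega>. a (V i \<omega>)) borel (\<lambda>\<omega>. b (V j \<omega>))" by simp
  show ?thesis
    using O.indep_var_lebesgue_integral[OF I integrable_V[OF ij(1) a] integrable_V[OF ij(2) b]]
      int_V[OF ij(1) a(1)] int_V[OF ij(2) b(1)] by simp
qed

end



lemma gft_dec:
  "gft p x y = indicator {..p} x * max 0 (y-p) + max 0 (p-x) * indicator {p..} y
     + indicator {..p} y * max 0 (x-p) + max 0 (p-y) * indicator {p..} x"
  unfolding gft_def by (auto simp: indicator_def max_def min_def)

context ftm_setup begin

interpretation O: prob_space \<Omega> by (rule PO)
interpretation N: prob_space \<nu> by (rule Pnu)

lemma integrable2:
  fixes a b :: "real \<Rightarrow> real"
  assumes ij: "i \<ge> 1" "j \<ge> 1" and a: "a \<in> borel_measurable borel" "\<And>x. 0 \<le> x \<Longrightarrow> x \<le> 1 \<Longrightarrow> \<bar>a x\<bar> \<le> B"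
    and b: "b \<in> borel_measurable borel" "\<And>x. 0 \<le> x \<Longrightarrow> x \<le> 1 \<Longrightarrow> \<bar>b x\<bar> \<le> C"
  shows "integrable \<Omega> (\<lambda>\<omega>. a (V i \<omega>) * b (V j \<omega>))"
proof (rule O.integrable_const_bound[where B="B*C"])
  show "AE x in \<Omega>. norm (a (V i x) * b (V j x)) \<le> B * C"
    using AE_V01[OF ij(1)] AE_V01[OF ij(2)]
  proof eventually_elim
    case (elim x)
    then show ?case using a(2)[of "V i x"] b(2)[of "V j x"]
      by (auto simp: abs_mult intro!: mult_mono)
  qed
  show "(\<lambda>x. a (V i x) * b (V j x)) \<in> borel_measurable \<Omega>" using rv[OF ij(1)] rv[OF ij(2)] a(1) b(1) by measurable
qed

lemma expect_gft:
  assumes t: "t \<ge> 1"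
  shows "integral\<^sup>L \<Omega> (GFT V t p) = 2 * Hf \<nu> (\<integral>x. x \<partial>\<nu>) p"
proof -
  define i where "i = 2*t - 1"
  define j where "j = 2*t"
  have ij: "i \<ge> 1" "j \<ge> 1" "i \<noteq> j" "j \<noteq> i" using t by (auto simp: i_def j_def)
  define \<mu> where "\<mu> = (\<integral>x. x \<partial>\<nu>)"
  define F where "F = (\<integral>x. (indicator {..p} x :: real) \<partial>\<nu>)"
  define S where "S = (\<integral>x. (indicator {p..} x :: real) \<partial>\<nu>)"
  define A where "A = (\<integral>x. max 0 (x-p) \<partial>\<nu>)"
  define B where "B = (\<integral>x. max 0 (p-x) \<partial>\<nu>)"
  have m1: "(indicator {..p} :: real \<Rightarrow> real) \<in> borel_measurable borel" by measurable
  have m2: "(indicator {p..} :: real \<Rightarrow> real) \<in> borel_measurable borel" by measurable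
  have m3: "(\<lambda>x::real. max 0 (x-p)) \<in> borel_measurable borel" by measurable
  have m4: "(\<lambda>x::real. max 0 (p-x)) \<in> borel_measurable borel" by measurable
  have b1: "\<bar>indicator {..p} x\<bar> \<le> (1::real)" for x by (auto simp: indicator_def)
  have b2: "\<bar>indicator {p..} x\<bar> \<le> (1::real)" for x by (auto simp: indicator_def)
  have b3: "0 \<le> x \<Longrightarrow> x \<le> 1 \<Longrightarrow> \<bar>max 0 (x-p)\<bar> \<le> \<bar>p\<bar> + 1" for x by auto
  have b4: "0 \<le> x \<Longrightarrow> x \<le> 1 \<Longrightarrow> \<bar>max 0 (p-x)\<bar> \<le> \<bar>p\<bar> + 1" for x by auto
  note I2 = integrable2[OF ij(1) ij(2)] integrable2[OF ij(2) ij(1)]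
  have e: "GFT V t p = (\<lambda>\<omega>. indicator {..p} (V i \<omega>) * max 0 (V j \<omega> - p) + max 0 (p - V i \<omega>) * indicator {p..} (V j \<omega>)
     + indicator {..p} (V j \<omega>) * max 0 (V i \<omega> - p) + max 0 (p - V j \<omega>) * indicator {p..} (V i \<omega>))"
    unfolding GFT_def i_def j_def by (rule ext, rule gft_dec)
  have b1': "0 \<le> x \<Longrightarrow> x \<le> 1 \<Longrightarrow> \<bar>indicator {..p} x\<bar> \<le> (1::real)" for x by (rule b1)
  have b2': "0 \<le> x \<Longrightarrow> x \<le> 1 \<Longrightarrow> \<bar>indicator {p..} x\<bar> \<le> (1::real)" for x by (rule b2)
  have i1: "integrable \<Omega> (\<lambda>\<omega>. indicator {..p} (V i \<omega>) * max 0 (V j \<omega> - p))"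
    by (rule integrable2[OF ij(1) ij(2) m1 b1' m3 b3])
  have i2: "integrable \<Omega> (\<lambda>\<omega>. max 0 (p - V i \<omega>) * indicator {p..} (V j \<omega>))"
    by (rule integrable2[OF ij(1) ij(2) m4 b4 m2 b2'])
  have i3: "integrable \<Omega> (\<lambda>\<omega>. indicator {..p} (V j \<omega>) * max 0 (V i \<omega> - p))"
    by (rule integrable2[OF ij(2) ij(1) m1 b1' m3 b3])
  have i4: "integrable \<Omega> (\<lambda>\<omega>. max 0 (p - V j \<omega>) * indicator {p..} (V i \<omega>))"
    by (rule integrable2[OF ij(2) ij(1) m4 b4 m2 b2'])
  have p1: "(\<integral>\<omega>. indicator {..p} (V i \<omega>) * max 0 (V j \<omega> - p) \<partial>\<Omega>) = F * A"
    unfolding F_def A_def by (rule int_prod[OF ij(1) ij(2) ij(3) m1 b1' m3 b3])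
  have p2: "(\<integral>\<omega>. max 0 (p - V i \<omega>) * indicator {p..} (V j \<omega>) \<partial>\<Omega>) = B * S"
    unfolding B_def S_def by (rule int_prod[OF ij(1) ij(2) ij(3) m4 b4 m2 b2'])
  have p3: "(\<integral>\<omega>. indicator {..p} (V j \<omega>) * max 0 (V i \<omega> - p) \<partial>\<Omega>) = F * A"
    unfolding F_def A_def by (rule int_prod[OF ij(2) ij(1) ij(4) m1 b1' m3 b3])
  have p4: "(\<integral>\<omega>. max 0 (p - V j \<omega>) * indicator {p..} (V i \<omega>) \<partial>\<Omega>) = B * S"
    unfolding B_def S_def by (rule int_prod[OF ij(2) ij(1) ij(4) m4 b4 m2 b2'])
  have G: "integral\<^sup>L \<Omega> (GFT V t p) = F * A + B * S + F * A + B * S"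
    unfolding e by (simp add: i1 i2 i3 i4 Bochner_Integration.integral_add p1 p2 p3 p4)
  have hS: "S = 1 - F"
  proof -
    have "S = (\<integral>x. 1 - indicator {..p} x + indicator {p} x \<partial>\<nu>)"
      unfolding S_def by (rule Bochner_Integration.integral_cong) (auto simp: indicator_def)
    also have "\<dots> = 1 - F + measure \<nu> {p}"
    proof -
      have j1: "integrable \<nu> (indicator {..p} :: real \<Rightarrow> real)" by (rule int01[OF nuP m1 b1'])
      have j2: "integrable \<nu> (indicator {p} :: real \<Rightarrow> real)" by (rule int01[OF nuP, where B=1]) (auto simp: indicator_def)
      have j3: "integrable \<nu> (\<lambda>x. 1 - indicator {..p} x :: real)" using j1 by simp
      have "(\<integral>x. 1 - indicator {..p} x + indicator {p} x \<partial>\<nu>) = (\<integral>x. 1 - indicator {..p} x \<partial>\<nu>) + (\<integral>x. indicator {p} x \<partial>\<nu> :: real)"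
        by (rule Bochner_Integration.integral_add[OF j3 j2])
      also have "(\<integral>x. 1 - indicator {..p} x \<partial>\<nu>) = (1 - F :: real)"
        unfolding F_def using j1 by (simp add: Bochner_Integration.integral_diff N.prob_space)
      also have "(\<integral>x. indicator {p} x \<partial>\<nu> :: real) = measure \<nu> {p}"
        by (simp add: space_nu)
      finally show ?thesis .
    qed
    finally show ?thesis using nu_single by simp
  qed
  have hA: "A - B = \<mu> - p"
  proof -
    have "A - B = (\<integral>x. max 0 (x-p) - max 0 (p-x) \<partial>\<nu>)"
      unfolding A_def B_def
      by (rule Bochner_Integration.integral_diff[symmetric]; rule int01[OF nuP]; (rule m3 m4 b3 b4 | assumption)+)
    also have "\<dots> = (\<integral>x. x - p \<partial>\<nu>)" by (rule Bochner_Integration.integral_cong) auto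
    also have "\<dots> = \<mu> - p" unfolding \<mu>_def
      by (subst Bochner_Integration.integral_diff) (auto intro!: int01[OF nuP, where B=1] simp: N.prob_space)
    finally show ?thesis .
  qed
  have hH: "Hf \<nu> \<mu> p = B + F * (\<mu> - p)"
  proof -
    have k1: "integrable \<nu> (\<lambda>x. max 0 (p-x))" by (rule int01[OF nuP m4 b4])
    have k2: "integrable \<nu> (\<lambda>x. indicator {..p} x * (\<mu> - p) :: real)"
      by (rule int01[OF nuP, where B="\<bar>\<mu>-p\<bar>"]) (auto simp: indicator_def)
    show ?thesis unfolding Hf_def B_def F_def
      by (simp add: Bochner_Integration.integral_add[OF k1 k2])
  qed
  have hA': "A = B + (\<mu> - p)" using hA by simp
  have "F * A + B * S + F * A + B * S = 2 * (B + F * (\<mu> - p))"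
    unfolding hA' hS by (simp add: algebra_simps)
  then show ?thesis using G hH unfolding \<mu>_def by simp
qed

end



context ftm_setup begin

interpretation O: prob_space \<Omega> by (rule PO)
interpretation N: prob_space \<nu> by (rule Pnu)

lemma mu01: "0 \<le> (\<integral>x. x \<partial>\<nu>)" "(\<integral>x. x \<partial>\<nu>) \<le> 1"
  using Hf_mu[OF nuP refl] by auto

lemma sigma_bound: "(\<integral>x. (x - (\<integral>x. x \<partial>\<nu>)) * (x - (\<integral>x. x \<partial>\<nu>)) \<partial>\<nu>) \<le> 1/4"
proof -
  define \<mu> where "\<mu> = (\<integral>x. x \<partial>\<nu>)"
  have Ix: "integrable \<nu> (\<lambda>x. x)" by (rule int01[OF nuP, where B=1]) auto
  have "(\<integral>x. (x - \<mu>) * (x - \<mu>) \<partial>\<nu>) \<le> (\<integral>x. x * (1 - 2*\<mu>) + \<mu>*\<mu> \<partial>\<nu>)"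
  proof (rule integral_mono_AE)
    show "integrable \<nu> (\<lambda>x. (x - \<mu>) * (x - \<mu>))"
    proof (rule int01[OF nuP, where B="(1+\<bar>\<mu>\<bar>)*(1+\<bar>\<mu>\<bar>)"])
      fix x :: real assume "0 \<le> x" "x \<le> 1"
      then have h: "\<bar>x-\<mu>\<bar> \<le> 1+\<bar>\<mu>\<bar>" by auto
      then show "\<bar>(x-\<mu>)*(x-\<mu>)\<bar> \<le> (1+\<bar>\<mu>\<bar>)*(1+\<bar>\<mu>\<bar>)"
        unfolding abs_mult using h by (intro mult_mono) auto
    qed measurable
    show "integrable \<nu> (\<lambda>x. x * (1 - 2*\<mu>) + \<mu>*\<mu>)" using Ix by simp
    show "AE x in \<nu>. (x - \<mu>) * (x - \<mu>) \<le> x * (1 - 2*\<mu>) + \<mu>*\<mu>" using AE_nu01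
    proof eventually_elim
      case (elim x)
      then have "x * x \<le> x" using mult_left_le[of x x] by simp
      then show ?case by (simp add: algebra_simps)
    qed
  qed
  also have "\<dots> = \<mu> * (1 - 2*\<mu>) + \<mu>*\<mu>" using Ix by (simp add: \<mu>_def N.prob_space)
  also have "\<dots> \<le> 1/4" using zero_le_power2[of "\<mu> - 1/2"] by (simp add: power2_eq_square algebra_simps)
  finally show ?thesis unfolding \<mu>_def .
qed

lemma var_bound:
  assumes n: "n \<ge> 1"
  shows "integrable \<Omega> (\<lambda>\<omega>. ((\<Sum>s=1..n. V s \<omega>) / real n - (\<integral>x. x \<partial>\<nu>))^2)"
    and "(\<integral>\<omega>. ((\<Sum>s=1..n. V s \<omega>) / real n - (\<integral>x. x \<partial>\<nu>))^2 \<partial>\<Omega>) \<le> 1 / (4 * real n)"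
proof -
  define \<mu> where "\<mu> = (\<integral>x. x \<partial>\<nu>)"
  define S where "S = {1..n}"
  define \<sigma> where "\<sigma> = (\<integral>x. (x - \<mu>) * (x - \<mu>) \<partial>\<nu>)"
  have \<sigma>: "\<sigma> \<le> 1/4" unfolding \<sigma>_def \<mu>_def by (rule sigma_bound)
  have m: "0 \<le> \<mu>" "\<mu> \<le> 1" using mu01 unfolding \<mu>_def by auto
  have S1: "s \<in> S \<Longrightarrow> s \<ge> 1" for s unfolding S_def by auto
  have cS: "card S = n" "finite S" unfolding S_def by auto
  have mm: "(\<lambda>x::real. x - \<mu>) \<in> borel_measurable borel" by measurable
  have bb: "0 \<le> x \<Longrightarrow> x \<le> 1 \<Longrightarrow> \<bar>x - \<mu>\<bar> \<le> 1" for x using m by auto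
  have Iq: "integrable \<Omega> (\<lambda>\<omega>. (V s \<omega> - \<mu>) * (V r \<omega> - \<mu>))" if "s \<in> S" "r \<in> S" for s r
    using integrable2[OF S1[OF that(1)] S1[OF that(2)] mm bb mm bb] by simp
  have Eq: "(\<integral>\<omega>. (V s \<omega> - \<mu>) * (V r \<omega> - \<mu>) \<partial>\<Omega>) = (if s = r then \<sigma> else 0)" if "s \<in> S" "r \<in> S" for s r
  proof (cases "s = r")
    case True
    have "(\<integral>\<omega>. (V s \<omega> - \<mu>) * (V s \<omega> - \<mu>) \<partial>\<Omega>) = \<sigma>" unfolding \<sigma>_def
      by (rule int_V[OF S1[OF that(1)], of "\<lambda>x. (x - \<mu>) * (x - \<mu>)"]) measurable
    then show ?thesis using True by simp
  next
    case False
    have "(\<integral>\<omega>. (V s \<omega> - \<mu>) * (V r \<omega> - \<mu>) \<partial>\<Omega>) = (\<integral>x. x - \<mu> \<partial>\<nu>) * (\<integral>x. x - \<mu> \<partial>\<nu>)"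
      using int_prod[OF S1[OF that(1)] S1[OF that(2)] False mm bb mm bb] by simp
    also have "(\<integral>x. x - \<mu> \<partial>\<nu>) = 0"
      using int01[OF nuP, of "\<lambda>x. x" 1] by (simp add: \<mu>_def N.prob_space Bochner_Integration.integral_diff)
    finally show ?thesis using False by simp
  qed
  have pw: "((\<Sum>s=1..n. V s \<omega>) / real n - \<mu>)^2 = (\<Sum>s\<in>S. \<Sum>r\<in>S. (V s \<omega> - \<mu>) * (V r \<omega> - \<mu>)) / (real n)^2" for \<omega>
  proof -
    have "(\<Sum>s=1..n. V s \<omega>) / real n - \<mu> = (\<Sum>s\<in>S. V s \<omega> - \<mu>) / real n"
      using n cS by (simp add: sum_subtractf S_def field_simps)
    then show ?thesis by (simp add: power2_eq_square sum_product)
  qed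
  have Isum: "integrable \<Omega> (\<lambda>\<omega>. (\<Sum>s\<in>S. \<Sum>r\<in>S. (V s \<omega> - \<mu>) * (V r \<omega> - \<mu>)))"
    by (intro Bochner_Integration.integrable_sum) (rule Iq; assumption)
  show "integrable \<Omega> (\<lambda>\<omega>. ((\<Sum>s=1..n. V s \<omega>) / real n - (\<integral>x. x \<partial>\<nu>))^2)"
    unfolding \<mu>_def[symmetric] pw using Isum by simp
  have "(\<integral>\<omega>. (\<Sum>s\<in>S. \<Sum>r\<in>S. (V s \<omega> - \<mu>) * (V r \<omega> - \<mu>)) \<partial>\<Omega>) = (\<Sum>s\<in>S. \<Sum>r\<in>S. if s = r then \<sigma> else 0)"
    using Iq Eq by (simp add: integrable_sum Bochner_Integration.integral_sum)
  also have "\<dots> = real n * \<sigma>" using cS by simp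
  finally have E: "(\<integral>\<omega>. (\<Sum>s\<in>S. \<Sum>r\<in>S. (V s \<omega> - \<mu>) * (V r \<omega> - \<mu>)) \<partial>\<Omega>) = real n * \<sigma>" .
  have "(\<integral>\<omega>. ((\<Sum>s=1..n. V s \<omega>) / real n - \<mu>)^2 \<partial>\<Omega>) = real n * \<sigma> / (real n)^2"
    unfolding pw using E by simp
  also have "\<dots> = \<sigma> / real n" using n by (simp add: power2_eq_square)
  also have "\<dots> \<le> (1/4) / real n" by (rule divide_right_mono) (use \<sigma> in auto)
  finally show "(\<integral>\<omega>. ((\<Sum>s=1..n. V s \<omega>) / real n - (\<integral>x. x \<partial>\<nu>))^2 \<partial>\<Omega>) \<le> 1 / (4 * real n)"
    unfolding \<mu>_def by simp
qed

end



lemma gft_meas: "(\<lambda>(z, w). gft z (fst w) (snd w)) \<in> borel_measurable (borel \<Otimes>\<^sub>M (borel \<Otimes>\<^sub>M borel))"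
  unfolding gft_def by measurable

lemma gft_bound: "0 \<le> x \<Longrightarrow> x \<le> 1 \<Longrightarrow> 0 \<le> y \<Longrightarrow> y \<le> 1 \<Longrightarrow> \<bar>gft z x y\<bar> \<le> 1"
  unfolding gft_def by (auto simp: max_def min_def)

context ftm_setup begin

interpretation O: prob_space \<Omega> by (rule PO)
interpretation N: prob_space \<nu> by (rule Pnu)

lemma ftm_indep:
  assumes t: "t \<ge> 2"
  shows "prob_space.indep_var \<Omega> (borel \<Otimes>\<^sub>M borel) (\<lambda>\<omega>. (ftm_price V t \<omega>, 0::real)) (borel \<Otimes>\<^sub>M borel) (\<lambda>\<omega>. (V (2*t-1) \<omega>, V (2*t) \<omega>))"
proof -
  define n where "n = 2*(t-1)"
  have "prob_space.indep_var \<Omega> (borel \<Otimes>\<^sub>M borel) (\<lambda>\<omega>. (\<lambda>x. ((\<Sum>s=1..n. x s) / real n, 0::real)) (restrict (\<lambda>i. V i \<omega>) {1..n}))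
     (borel \<Otimes>\<^sub>M borel) (\<lambda>\<omega>. (\<lambda>x. (x (2*t-1), x (2*t))) (restrict (\<lambda>i. V i \<omega>) {2*t-1, 2*t}))"
  proof (rule O.indep_blocks[OF ind])
    show "(\<lambda>x. ((\<Sum>s=1..n. x s) / real n, 0::real)) \<in> measurable (PiM {1..n} (\<lambda>_. borel)) (borel \<Otimes>\<^sub>M borel)"
      by (intro measurable_Pair borel_measurable_divide borel_measurable_sum measurable_component_singleton measurable_const) auto
    show "(\<lambda>x. (x (2*t-1), x (2*t))) \<in> measurable (PiM {2*t-1, 2*t} (\<lambda>_. borel)) (borel \<Otimes>\<^sub>M borel)"
      by (intro measurable_Pair measurable_component_singleton) auto
  qed (use t in \<open>auto simp: n_def\<close>)
  moreover have "(\<lambda>\<omega>. (\<lambda>x. ((\<Sum>s=1..n. x s) / real n, 0::real)) (restrict (\<lambda>i. V i \<omega>) {1..n})) = (\<lambda>\<omega>. (ftm_price V t \<omega>, 0))"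
    using t by (auto simp: ftm_price_def n_def intro!: ext sum.cong)
  moreover have "(\<lambda>\<omega>. (\<lambda>x. (x (2*t-1), x (2*t))) (restrict (\<lambda>i. V i \<omega>) {2*t-1, 2*t})) = (\<lambda>\<omega>. (V (2*t-1) \<omega>, V (2*t) \<omega>))"
    by auto
  ultimately show ?thesis by simp
qed


lemma ftm_round:
  assumes t: "t \<ge> 2"
  shows "2 * Hf \<nu> (\<integral>x. x \<partial>\<nu>) (\<integral>x. x \<partial>\<nu>) - M / (8 * (real t - 1)) \<le> (\<integral>\<omega>. GFT V t (ftm_price V t \<omega>) \<omega> \<partial>\<Omega>)"
proof -
  define \<mu> where "\<mu> = (\<integral>x. x \<partial>\<nu>)"
  define n where "n = 2*(t-1)"
  have n1: "n \<ge> 1" using t by (simp add: n_def)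
  have fp: "ftm_price V t \<omega> = (\<Sum>s=1..n. V s \<omega>) / real n" for \<omega>
    using t by (simp add: ftm_price_def n_def)
  define P where "P = (borel \<Otimes>\<^sub>M borel :: (real \<times> real) measure)"
  define Z where "Z = (\<lambda>\<omega>. (ftm_price V t \<omega>, 0::real))"
  define W where "W = (\<lambda>\<omega>. (V (2*t-1) \<omega>, V (2*t) \<omega>))"
  have I: "O.indep_var P Z P W" unfolding Z_def W_def P_def by (rule ftm_indep[OF t])
  have rZ: "Z \<in> measurable \<Omega> P" using O.indep_var_rv1[OF I] .
  have rW: "W \<in> measurable \<Omega> P" using O.indep_var_rv2[OF I] .
  define DZ where "DZ = distr \<Omega> P Z"
  define DW where "DW = distr \<Omega> P W"
  have D: "DZ \<Otimes>\<^sub>M DW = distr \<Omega> (P \<Otimes>\<^sub>M P) (\<lambda>\<omega>. (Z \<omega>, W \<omega>))"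
    using I unfolding O.indep_var_distribution_eq DZ_def DW_def by simp
  interpret DZp: prob_space DZ unfolding DZ_def by (rule O.prob_space_distr[OF rZ])
  interpret DWp: prob_space DW unfolding DW_def by (rule O.prob_space_distr[OF rW])
  interpret PP: pair_prob_space DZ DW ..
  define \<phi> where "\<phi> = (\<lambda>(zz::real\<times>real, w::real\<times>real). gft (fst zz) (fst w) (snd w))"
  have \<phi>m: "\<phi> \<in> borel_measurable (P \<Otimes>\<^sub>M P)" unfolding \<phi>_def P_def gft_def by measurable
  have rZW: "(\<lambda>\<omega>. (Z \<omega>, W \<omega>)) \<in> measurable \<Omega> (P \<Otimes>\<^sub>M P)" using rZ rW by (rule measurable_Pair)
  have intO: "integrable \<Omega> (\<lambda>\<omega>. \<phi> (Z \<omega>, W \<omega>))"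
  proof (rule O.integrable_const_bound[where B=1])
    show "AE \<omega> in \<Omega>. norm (\<phi> (Z \<omega>, W \<omega>)) \<le> 1"
      using AE_V01[of "2*t-1"] AE_V01[of "2*t"] t
    proof -
      have a1: "AE \<omega> in \<Omega>. 0 \<le> V (2*t-1) \<omega> \<and> V (2*t-1) \<omega> \<le> 1" using AE_V01[of "2*t-1"] t by simp
      have a2: "AE \<omega> in \<Omega>. 0 \<le> V (2*t) \<omega> \<and> V (2*t) \<omega> \<le> 1" using AE_V01[of "2*t"] t by simp
      from a1 a2 show ?thesis
    proof eventually_elim
      case (elim \<omega>) then show ?case unfolding \<phi>_def W_def by (auto intro!: gft_bound)
    qed
    qed
    show "(\<lambda>\<omega>. \<phi> (Z \<omega>, W \<omega>)) \<in> borel_measurable \<Omega>"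
      by (rule measurable_compose[OF rZW \<phi>m])
  qed
  have intP: "integrable (DZ \<Otimes>\<^sub>M DW) \<phi>"
    unfolding D using intO by (subst integrable_distr_eq[OF rZW \<phi>m])
  have inner: "(\<integral>w. \<phi> (zz, w) \<partial>DW) = 2 * Hf \<nu> \<mu> (fst zz)" for zz
  proof -
    have m: "(\<lambda>w. \<phi> (zz, w)) \<in> borel_measurable P"
      using measurable_compose[OF measurable_Pair1'[of zz P P] \<phi>m] by (simp add: P_def space_pair_measure)
    have "(\<integral>w. \<phi> (zz, w) \<partial>DW) = (\<integral>\<omega>. \<phi> (zz, W \<omega>) \<partial>\<Omega>)"
      unfolding DW_def by (rule integral_distr[OF rW m])
    also have "\<dots> = integral\<^sup>L \<Omega> (GFT V t (fst zz))"
      by (simp add: \<phi>_def W_def GFT_def[abs_def])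
    also have "\<dots> = 2 * Hf \<nu> \<mu> (fst zz)" unfolding \<mu>_def using t by (intro expect_gft) simp
    finally show ?thesis .
  qed
  have "(\<integral>\<omega>. GFT V t (ftm_price V t \<omega>) \<omega> \<partial>\<Omega>) = (\<integral>\<omega>. \<phi> (Z \<omega>, W \<omega>) \<partial>\<Omega>)"
    by (simp add: GFT_def \<phi>_def Z_def W_def)
  also have "\<dots> = integral\<^sup>L (DZ \<Otimes>\<^sub>M DW) \<phi>"
    unfolding D by (rule integral_distr[OF rZW \<phi>m, symmetric])
  also have "\<dots> = (\<integral>zz. (\<integral>w. \<phi> (zz, w) \<partial>DW) \<partial>DZ)"
    by (rule PP.integral_fst'[OF intP, symmetric])
  also have "\<dots> = (\<integral>zz. 2 * Hf \<nu> \<mu> (fst zz) \<partial>DZ)" by (simp add: inner)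
  finally have E: "(\<integral>\<omega>. GFT V t (ftm_price V t \<omega>) \<omega> \<partial>\<Omega>) = (\<integral>zz. 2 * Hf \<nu> \<mu> (fst zz) \<partial>DZ)" .
  have intZ: "integrable DZ (\<lambda>zz. 2 * Hf \<nu> \<mu> (fst zz))"
    using PP.integrable_fst'[OF intP] by (simp add: inner)
  have qm: "(\<lambda>zz::real\<times>real. 2 * Hf \<nu> \<mu> \<mu> - M * (fst zz - \<mu>)^2) \<in> borel_measurable P"
    unfolding P_def by measurable
  have VB1: "integrable \<Omega> (\<lambda>\<omega>. ((\<Sum>s=1..n. V s \<omega>) / real n - \<mu>)^2)"
    unfolding \<mu>_def by (rule var_bound(1)[OF n1])
  have VB2: "(\<integral>\<omega>. ((\<Sum>s=1..n. V s \<omega>) / real n - \<mu>)^2 \<partial>\<Omega>) \<le> 1 / (4 * real n)"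
    unfolding \<mu>_def by (rule var_bound(2)[OF n1])
  have intL: "integrable DZ (\<lambda>zz. 2 * Hf \<nu> \<mu> \<mu> - M * (fst zz - \<mu>)^2)"
    unfolding DZ_def using VB1 by (subst integrable_distr_eq[OF rZ qm]) (simp add: Z_def fp)
  have "(\<integral>zz. 2 * Hf \<nu> \<mu> \<mu> - M * (fst zz - \<mu>)^2 \<partial>DZ) \<le> (\<integral>zz. 2 * Hf \<nu> \<mu> (fst zz) \<partial>DZ)"
  proof (rule integral_mono[OF intL intZ])
    fix zz :: "real \<times> real"
    show "2 * Hf \<nu> \<mu> \<mu> - M * (fst zz - \<mu>)^2 \<le> 2 * Hf \<nu> \<mu> (fst zz)"
      using Hf_quad[OF nuP nu fm f0 fM, of \<mu> "fst zz"] by simp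
  qed
  moreover have "(\<integral>zz. 2 * Hf \<nu> \<mu> \<mu> - M * (fst zz - \<mu>)^2 \<partial>DZ)
      = 2 * Hf \<nu> \<mu> \<mu> - M * (\<integral>\<omega>. ((\<Sum>s=1..n. V s \<omega>) / real n - \<mu>)^2 \<partial>\<Omega>)"
  proof -
    have "(\<integral>zz. 2 * Hf \<nu> \<mu> \<mu> - M * (fst zz - \<mu>)^2 \<partial>DZ) = (\<integral>\<omega>. 2 * Hf \<nu> \<mu> \<mu> - M * ((\<Sum>s=1..n. V s \<omega>) / real n - \<mu>)^2 \<partial>\<Omega>)"
      unfolding DZ_def by (subst integral_distr[OF rZ qm]) (simp add: Z_def fp)
    also have "\<dots> = 2 * Hf \<nu> \<mu> \<mu> - M * (\<integral>\<omega>. ((\<Sum>s=1..n. V s \<omega>) / real n - \<mu>)^2 \<partial>\<Omega>)"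
      using VB1 by (simp add: Bochner_Integration.integral_diff O.prob_space)
    finally show ?thesis .
  qed
  moreover have "M * (\<integral>\<omega>. ((\<Sum>s=1..n. V s \<omega>) / real n - \<mu>)^2 \<partial>\<Omega>) \<le> M / (8 * (real t - 1))"
  proof -
    have M0: "0 \<le> M" using f0[of 0] fM[of 0] by linarith
    have "M * (\<integral>\<omega>. ((\<Sum>s=1..n. V s \<omega>) / real n - \<mu>)^2 \<partial>\<Omega>) \<le> M * (1 / (4 * real n))"
      by (rule mult_left_mono[OF VB2 M0])
    also have "\<dots> = M / (8 * (real t - 1))" using t by (simp add: n_def of_nat_diff)
    finally show ?thesis .
  qed
  ultimately show ?thesis unfolding E \<mu>_def[symmetric] by linarith
qed

end



lemma harm_bound:
  assumes "T \<ge> (2::nat)"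
  shows "(\<Sum>t=2..T. 1 / (real t - 1)) \<le> 1 + ln (real T - 1)"
  using assms
proof (induction T rule: nat_induct_at_least)
  case base then show ?case by simp
next
  case (Suc T)
  have T: "real T \<ge> 2" using Suc.hyps by simp
  have "ln ((real T - 1) / real T) \<le> (real T - 1) / real T - 1"
    by (rule ln_le_minus_one) (use T in auto)
  moreover have "ln ((real T - 1) / real T) = ln (real T - 1) - ln (real T)"
    by (rule ln_divide_pos) (use T in auto)
  moreover have "(real T - 1) / real T - 1 = - (1 / real T)" using T by (simp add: diff_divide_distrib)
  ultimately have "1 / real T \<le> ln (real T) - ln (real T - 1)" by linarith
  then show ?case using Suc.IH Suc.hyps by simp
qed

lemma gft_nonneg: "0 \<le> gft p x y" unfolding gft_def by auto

theorem theorem3p1: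
  fixes \<Omega> :: "'a measure" and V :: "nat \<Rightarrow> 'a \<Rightarrow> real"
    and \<nu> :: "real measure" and f :: "real \<Rightarrow> real" and M :: real and T :: nat
  assumes "prob_space \<Omega>"
    and "prob_space \<nu>"
    and "measure \<nu> {0..1} = 1"
    and "f \<in> borel_measurable borel"
    and "\<And>x. 0 \<le> f x" and "\<And>x. f x \<le> M" and "M > 0"
    and "\<nu> = density lborel (\<lambda>x. ennreal (f x))"
    and "prob_space.indep_vars \<Omega> (\<lambda>_. borel) V {1..}"
    and "\<And>i. i \<ge> 1 \<Longrightarrow> distr \<Omega> borel (V i) = \<nu>"
    and "T \<ge> 2"
  shows "regret \<Omega> V (ftm_price V) T \<le> 1/2 + M/4 * (1 + ln (real T - 1))"
proof -
  interpret S: ftm_setup \<Omega> V \<nu> f M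
    by (rule ftm_setup.intro[OF assms(1-6) assms(8-10)])
  define \<mu> where "\<mu> = (\<integral>x. x \<partial>\<nu>)"
  define H0 where "H0 = Hf \<nu> \<mu> \<mu>"
  have H0: "H0 \<le> 1/4" unfolding H0_def using Hf_mu(1)[OF S.nuP \<mu>_def] .
  have T1: "T \<ge> 1" using assms(11) by simp
  have sup: "(SUP p\<in>{0..1}. \<Sum>t=1..T. integral\<^sup>L \<Omega> (GFT V t p)) \<le> real T * (2 * H0)"
  proof (rule cSUP_least)
    show "{0..1::real} \<noteq> {}" by simp
    fix p :: real
    have "(\<Sum>t=1..T. integral\<^sup>L \<Omega> (GFT V t p)) = (\<Sum>t=1..T. 2 * Hf \<nu> \<mu> p)"
      unfolding \<mu>_def by (intro sum.cong refl S.expect_gft) simp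
    also have "\<dots> \<le> (\<Sum>t=1..T. 2 * H0)"
      unfolding H0_def by (intro sum_mono) (use Hf_le[OF S.nuP] in simp)
    also have "\<dots> = real T * (2 * H0)" by simp
    finally show "(\<Sum>t=1..T. integral\<^sup>L \<Omega> (GFT V t p)) \<le> real T * (2 * H0)" .
  qed
  define R where "R = (\<lambda>t. (\<integral>\<omega>. GFT V t (ftm_price V t \<omega>) \<omega> \<partial>\<Omega>))"
  have R1: "0 \<le> R 1"
    unfolding R_def GFT_def by (rule integral_nonneg_AE) (simp add: gft_nonneg)
  have Rt: "2 * H0 - M / (8 * (real t - 1)) \<le> R t" if "t \<in> {2..T}" for t
    unfolding R_def H0_def \<mu>_def using S.ftm_round[of t] that by simp
  have "(\<Sum>t=1..T. R t) = R 1 + (\<Sum>t=2..T. R t)"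
    using sum.atLeast_Suc_atMost[OF T1, of R] by (simp add: numeral_2_eq_2)
  moreover have "(\<Sum>t=2..T. 2 * H0 - M / (8 * (real t - 1))) \<le> (\<Sum>t=2..T. R t)"
    by (rule sum_mono) (rule Rt)
  moreover have "(\<Sum>t=2..T. 2 * H0 - M / (8 * (real t - 1))) = real (T - 1) * (2 * H0) - M / 8 * (\<Sum>t=2..T. 1 / (real t - 1))"
    by (simp add: sum_subtractf sum_distrib_left)
  moreover have "real T * (2 * H0) = 2 * H0 + real (T - 1) * (2 * H0)"
    using T1 by (simp add: of_nat_diff algebra_simps)
  moreover have "M / 8 * (\<Sum>t=2..T. 1 / (real t - 1)) \<le> M / 4 * (1 + ln (real T - 1))"
  proof -
    have L: "0 \<le> ln (real T - 1)" using assms(11) by simp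
    have "M / 8 * (\<Sum>t=2..T. 1 / (real t - 1)) \<le> M / 8 * (1 + ln (real T - 1))"
      using harm_bound[OF assms(11)] assms(7) by (intro mult_left_mono) auto
    also have "\<dots> \<le> M / 4 * (1 + ln (real T - 1))"
      using L assms(7) by (intro mult_right_mono) auto
    finally show ?thesis .
  qed
  ultimately have "(SUP p\<in>{0..1}. \<Sum>t=1..T. integral\<^sup>L \<Omega> (GFT V t p)) - (\<Sum>t=1..T. R t) \<le> 1/2 + M/4 * (1 + ln (real T - 1))"
    using sup R1 H0 by linarith
  then show ?thesis unfolding regret_def R_def .
qed


end
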